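(* Let $G$ be a feasible graph. The election index of $G$, i.e. the minimum integer $r$ such that some deterministic algorithm, in which every node is given the port-labelled map of $G$, performs leader election in $G$ in time $r$, is equal to the smallest integer $\ell$ such that the augmented truncated views $\mathcal{B}^{\ell}(v)$ of all nodes $v$ of $G$ are pairwise distinct.
   Context: A graph is a simple undirected connected finite graph whose nodes have no identifiers; at each node $v$ of degree $d$ the incident edges carry distinct port numbers $0,\dots,d-1$ (port numbering is local: there is no relation between the two port numbers of an edge). The truncated view $\mathcal{V}^0(v)$ is a single node; $\mathcal{V}^{l+1}(v)$ is the port-labelled rooted tree whose root has, for every neighbour $v_i$ of $v$, a child $x_i$ such that the edge $\{x_0,x_i\}$ carries at $x_0$ the port number of $\{v,v_i\}$ at $v$ and at $x_i$ the port number of $\{v,v_i\}$ at $v_i$, and $x_i$ is the root of a copy of $\mathcal{V}^{l}(v_i)$. The view $\mathcal{V}(v)$ is the infinite tree whose truncation to depth $l$ is $\mathcal{V}^l(v)$ for every $l$. The augmented truncated view $\mathcal{B}^l(v)$ is $\mathcal{V}^l(v)$ with each leaf labelled by the degree in $G$ of the node it represents. A graph is feasible if the views $\mathcal{V}(v)$ of all its nodes are pairwise distinct. Communication model (LOCAL): computation proceeds in synchronous rounds, all nodes start simultaneously, and in each round every node exchanges arbitrary messages with all its neighbours and performs arbitrary local computation; the information a node $v$ obtains about the graph in $r$ rounds is exactly $\mathcal{B}^r(v)$. Leader election: every node $v$ must output a sequence $(p_1,q_1,\dots,p_k,q_k)$ of nonnegative integers such that there is a simple path starting at $v$ whose $i$-th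 edge has port $p_i$ at its endpoint closer to $v$ along the path and port $q_i$ at its other endpoint, and all these paths (over all nodes $v$) end at a common node, the leader. The time of an algorithm is the number of rounds until all nodes have output. *)

theory Defs
  imports Main
begin

text \<open>A graph is given by a vertex set V, a symmetric irreflexive adjacency
relation E on V, and a port function: port v w is the port number of the
edge {v,w} at v.\<close>

definition deg :: "('v \<Rightarrow> 'v \<Rightarrow> bool) \<Rightarrow> 'v \<Rightarrow> nat" where
  "deg E v = card {w. E v w}"

definition port_graph :: "'v set \<Rightarrow> ('v \<Rightarrow> 'v \<Rightarrow> bool) \<Rightarrow> ('v \<Rightarrow> 'v \<Rightarrow> nat) \<Rightarrow> bool" where
  "port_graph V E port \<longleftrightarrow>
     finite V \<and> V \<noteq> {} \<and>
     (\<forall>v w. E v w \<longrightarrow> v \<in> V \<and> w \<in> V) \<and>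
     (\<forall>v w. E v w \<longrightarrow> E w v) \<and>
     (\<forall>v. \<not> E v v) \<and>
     (\<forall>v\<in>V. \<forall>w\<in>V. E\<^sup>*\<^sup>* v w) \<and>
     (\<forall>v\<in>V. bij_betw (port v) {w. E v w} {0..<deg E v})"

definition nbr :: "('v \<Rightarrow> 'v \<Rightarrow> bool) \<Rightarrow> ('v \<Rightarrow> 'v \<Rightarrow> nat) \<Rightarrow> 'v \<Rightarrow> nat \<Rightarrow> 'v" where
  "nbr E port v p = (THE w. E v w \<and> port v w = p)"

text \<open>Port-labelled rooted trees, in canonical form: the children of a node
are listed in increasing order of the port number at the parent; each child
entry records (port at parent, port at child, subtree).\<close>

datatype vtree = VNode "(nat \<times> nat \<times> vtree) list"

text \<open>Trees with degree-labelled leaves (for augmented truncated views).\<close>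
datatype btree = BLeaf nat | BNode "(nat \<times> nat \<times> btree) list"

fun tview :: "('v \<Rightarrow> 'v \<Rightarrow> bool) \<Rightarrow> ('v \<Rightarrow> 'v \<Rightarrow> nat) \<Rightarrow> nat \<Rightarrow> 'v \<Rightarrow> vtree" where
  "tview E port 0 v = VNode []"
| "tview E port (Suc l) v =
     VNode (map (\<lambda>p. (p, port (nbr E port v p) v, tview E port l (nbr E port v p))) [0..<deg E v])"

fun aview :: "('v \<Rightarrow> 'v \<Rightarrow> bool) \<Rightarrow> ('v \<Rightarrow> 'v \<Rightarrow> nat) \<Rightarrow> nat \<Rightarrow> 'v \<Rightarrow> btree" where
  "aview E port 0 v = BLeaf (deg E v)"
| "aview E port (Suc l) v =
     BNode (map (\<lambda>p. (p, port (nbr E port v p) v, aview E port l (nbr E port v p))) [0..<deg E v])"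

text \<open>The (infinite) view V(v), represented by the family of all its
truncations.\<close>
definition view :: "('v \<Rightarrow> 'v \<Rightarrow> bool) \<Rightarrow> ('v \<Rightarrow> 'v \<Rightarrow> nat) \<Rightarrow> 'v \<Rightarrow> (nat \<Rightarrow> vtree)" where
  "view E port v = (\<lambda>l. tview E port l v)"

definition feasible :: "'v set \<Rightarrow> ('v \<Rightarrow> 'v \<Rightarrow> bool) \<Rightarrow> ('v \<Rightarrow> 'v \<Rightarrow> nat) \<Rightarrow> bool" where
  "feasible V E port \<longleftrightarrow> (\<forall>v\<in>V. \<forall>w\<in>V. v \<noteq> w \<longrightarrow> view E port v \<noteq> view E port w)"

text \<open>An node_output sequence (p1,q1,...,pk,qk) is represented as [(p1,q1),...,(pk,qk)].\<close>
definition port_path :: "('v \<Rightarrow> 'v \<Rightarrow> bool) \<Rightarrow> ('v \<Rightarrow> 'v \<Rightarrow> nat) \<Rightarrow> 'v \<Rightarrow> (nat \<times> nat) list \<Rightarrow> 'v list \<Rightarrow> bool" where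
  "port_path E port v ps xs \<longleftrightarrow>
     length xs = length ps + 1 \<and> hd xs = v \<and> distinct xs \<and>
     (\<forall>i < length ps. E (xs!i) (xs!Suc i) \<and>
        port (xs!i) (xs!Suc i) = fst (ps!i) \<and> port (xs!Suc i) (xs!i) = snd (ps!i))"

text \<open>A deterministic algorithm (which may depend on the map of G, since it is
chosen for the given G) in the LOCAL model: after t rounds a node knows exactly
B^t(v); A t b = Some out means a node whose knowledge after t rounds is b
outputs out at round t, None means it does not node_output yet.\<close>
type_synonym algorithm = "nat \<Rightarrow> btree \<Rightarrow> (nat \<times> nat) list option"

definition out_round :: "('v \<Rightarrow> 'v \<Rightarrow> bool) \<Rightarrow> ('v \<Rightarrow> 'v \<Rightarrow> nat) \<Rightarrow> algorithm \<Rightarrow> 'v \<Rightarrow> nat" where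
  "out_round E port A v = (LEAST t. A t (aview E port t v) \<noteq> None)"

definition node_output :: "('v \<Rightarrow> 'v \<Rightarrow> bool) \<Rightarrow> ('v \<Rightarrow> 'v \<Rightarrow> nat) \<Rightarrow> algorithm \<Rightarrow> 'v \<Rightarrow> (nat \<times> nat) list" where
  "node_output E port A v = the (A (out_round E port A v) (aview E port (out_round E port A v) v))"

definition run_time :: "'v set \<Rightarrow> ('v \<Rightarrow> 'v \<Rightarrow> bool) \<Rightarrow> ('v \<Rightarrow> 'v \<Rightarrow> nat) \<Rightarrow> algorithm \<Rightarrow> nat" where
  "run_time V E port A = Max (out_round E port A ` V)"

definition elects :: "'v set \<Rightarrow> ('v \<Rightarrow> 'v \<Rightarrow> bool) \<Rightarrow> ('v \<Rightarrow> 'v \<Rightarrow> nat) \<Rightarrow> algorithm \<Rightarrow> bool" where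
  "elects V E port A \<longleftrightarrow>
     (\<forall>v\<in>V. \<exists>t. A t (aview E port t v) \<noteq> None) \<and>
     (\<exists>leader\<in>V. \<forall>v\<in>V. \<exists>xs. port_path E port v (node_output E port A v) xs \<and> last xs = leader)"

definition election_index :: "'v set \<Rightarrow> ('v \<Rightarrow> 'v \<Rightarrow> bool) \<Rightarrow> ('v \<Rightarrow> 'v \<Rightarrow> nat) \<Rightarrow> nat" where
  "election_index V E port = (LEAST r. \<exists>A. elects V E port A \<and> run_time V E port A = r)"

end

theory Submission
  imports Defs
begin

lemma map_upt_eq:
  assumes "map f [0..<a] = map g [0..<b]"
  shows "a = b \<and> (\<forall>p<a. f p = g p)"
proof -
  have ab: "a = b" using arg_cong[OF assms, of length] by simp
  with assms have "map f [0..<a] = map g [0..<a]" by simp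
  then show ?thesis using ab by (simp add: map_eq_conv)
qed

lemma aview_Suc_eq:
  "aview E port (Suc l) v = aview E port (Suc l) w \<Longrightarrow> aview E port l v = aview E port l w"
proof (induction l arbitrary: v w)
  case 0
  then show ?case by (auto dest: map_upt_eq)
next
  case (Suc k)
  from Suc.prems have "map (\<lambda>p. (p, port (nbr E port v p) v, aview E port (Suc k) (nbr E port v p))) [0..<deg E v] =
     map (\<lambda>p. (p, port (nbr E port w p) w, aview E port (Suc k) (nbr E port w p))) [0..<deg E w]"
    by (simp only: aview.simps btree.inject)
  from map_upt_eq[OF this] have h: "deg E v = deg E w \<and> (\<forall>p<deg E v.
     (p, port (nbr E port v p) v, aview E port (Suc k) (nbr E port v p)) =
     (p, port (nbr E port w p) w, aview E port (Suc k) (nbr E port w p)))" .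
  then have "\<forall>p<deg E v. port (nbr E port v p) v = port (nbr E port w p) w \<and>
     aview E port k (nbr E port v p) = aview E port k (nbr E port w p)"
    using Suc.IH by (metis prod.inject)
  then show ?case using h by (simp add: map_eq_conv)
qed

lemma aview_le_eq:
  "t \<le> s \<Longrightarrow> aview E port s v = aview E port s w \<Longrightarrow> aview E port t v = aview E port t w"
proof (induction s arbitrary: t)
  case 0 then show ?case by simp
next
  case (Suc s)
  show ?case
  proof (cases "t = Suc s")
    case True then show ?thesis using Suc.prems by simp
  next
    case False
    then have "t \<le> s" using Suc.prems by simp
    moreover have "aview E port s v = aview E port s w" using Suc.prems(2) by (rule aview_Suc_eq)
    ultimately show ?thesis by (rule Suc.IH)
  qed
qed

lemma aview_tview:
  "aview E port l v = aview E port l w \<Longrightarrow> tview E port l v = tview E port l w"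
proof (induction l arbitrary: v w)
  case 0 then show ?case by simp
next
  case (Suc k)
  from Suc.prems have "map (\<lambda>p. (p, port (nbr E port v p) v, aview E port k (nbr E port v p))) [0..<deg E v] =
     map (\<lambda>p. (p, port (nbr E port w p) w, aview E port k (nbr E port w p))) [0..<deg E w]"
    by (simp only: aview.simps btree.inject)
  from map_upt_eq[OF this] have h: "deg E v = deg E w \<and> (\<forall>p<deg E v.
     (p, port (nbr E port v p) v, aview E port k (nbr E port v p)) =
     (p, port (nbr E port w p) w, aview E port k (nbr E port w p)))" .
  then have "\<forall>p<deg E v. port (nbr E port v p) v = port (nbr E port w p) w \<and>
     tview E port k (nbr E port v p) = tview E port k (nbr E port w p)"
  proof (intro allI impI)
    fix p assume "p < deg E v"
    with h have "port (nbr E port v p) v = port (nbr E port w p) w"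
      "aview E port k (nbr E port v p) = aview E port k (nbr E port w p)" by auto
    then show "port (nbr E port v p) v = port (nbr E port w p) w \<and>
     tview E port k (nbr E port v p) = tview E port k (nbr E port w p)" using Suc.IH by blast
  qed
  then show ?case using h by (simp add: map_eq_conv)
qed

lemma path_unique:
  assumes pg: "port_graph V E port"
    and px: "port_path E port v ps xs" and py: "port_path E port w ps ys"
    and la: "last xs = last ys"
  shows "xs = ys"
proof -
  define n where "n = length ps"
  have lx: "length xs = n + 1" and ly: "length ys = n + 1"
    using px py by (auto simp: port_path_def n_def)
  have sym: "\<And>a b. E a b \<Longrightarrow> E b a" and inV: "\<And>a b. E a b \<Longrightarrow> a \<in> V \<and> b \<in> V"
    and bij: "\<And>u. u \<in> V \<Longrightarrow> bij_betw (port u) {w. E u w} {0..<deg E u}"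
    using pg by (auto simp: port_graph_def)
  have key: "j \<le> n \<longrightarrow> xs!(n-j) = ys!(n-j)" for j
  proof (induction j)
    case 0
    have "xs \<noteq> []" "ys \<noteq> []" using lx ly by auto
    then have "last xs = xs!(length xs - 1)" "last ys = ys!(length ys - 1)"
      by (simp_all add: last_conv_nth)
    then have "last xs = xs!n" "last ys = ys!n" using lx ly by simp_all
    then show ?case using la by simp
  next
    case (Suc j)
    show ?case
    proof
      assume sj: "Suc j \<le> n"
      define i where "i = n - Suc j"
      have si: "Suc i = n - j" and il: "i < length ps" using sj by (auto simp: i_def n_def)
      have u: "xs!Suc i = ys!Suc i" using Suc.IH sj si by simp
      have e1: "E (xs!i) (xs!Suc i)" "port (xs!Suc i) (xs!i) = snd (ps!i)"
        using px il by (auto simp: port_path_def)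
      have e2: "E (ys!i) (ys!Suc i)" "port (ys!Suc i) (ys!i) = snd (ps!i)"
        using py il by (auto simp: port_path_def)
      have uV: "xs!Suc i \<in> V" using inV e1(1) by blast
      have "inj_on (port (xs!Suc i)) {w. E (xs!Suc i) w}"
        using bij[OF uV] bij_betw_def by blast
      moreover have "xs!i \<in> {w. E (xs!Suc i) w}" "ys!i \<in> {w. E (xs!Suc i) w}"
        using sym e1 e2 u by auto
      moreover have "port (xs!Suc i) (xs!i) = port (xs!Suc i) (ys!i)" using e1 e2 u by simp
      ultimately have "xs!i = ys!i" by (meson inj_onD)
      then show "xs!(n - Suc j) = ys!(n - Suc j)" by (simp add: i_def)
    qed
  qed
  show ?thesis
  proof (rule nth_equalityI)
    show "length xs = length ys" using lx ly by simp
  next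
    fix i assume "i < length xs"
    then have "i \<le> n" "n - (n - i) = i" using lx by auto
    then show "xs!i = ys!i" using key[of "n - i"] by simp
  qed
qed

definition iwalk :: "('v \<Rightarrow> 'v \<Rightarrow> bool) \<Rightarrow> 'v list \<Rightarrow> bool" where
  "iwalk E xs \<longleftrightarrow> xs \<noteq> [] \<and> (\<forall>i < length xs - 1. E (xs!i) (xs!Suc i))"

lemma iwalk_drop:
  assumes "iwalk E xs" "k < length xs" shows "iwalk E (drop k xs)"
  using assms unfolding iwalk_def by auto

lemma iwalk_Cons:
  assumes "iwalk E ys" "E v (hd ys)" shows "iwalk E (v # ys)"
proof -
  have ne: "ys \<noteq> []" and w: "\<forall>i < length ys - 1. E (ys!i) (ys!Suc i)"
    using assms(1) by (auto simp: iwalk_def)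
  have "E ((v#ys)!i) ((v#ys)!Suc i)" if "i < length (v#ys) - 1" for i
  proof (cases i)
    case 0 then show ?thesis using assms(2) ne by (simp add: hd_conv_nth)
  next
    case (Suc j) then show ?thesis using w that by simp
  qed
  then show ?thesis by (simp add: iwalk_def)
qed

lemma exists_path:
  assumes "E\<^sup>*\<^sup>* v l0"
  shows "\<exists>xs. iwalk E xs \<and> distinct xs \<and> hd xs = v \<and> last xs = l0"
  using assms
proof (induction rule: converse_rtranclp_induct)
  case base
  show ?case by (rule exI[of _ "[l0]"]) (simp add: iwalk_def)
next
  case (step y z)
  then obtain ys where ys: "iwalk E ys" "distinct ys" "hd ys = z" "last ys = l0" by blast
  have ne: "ys \<noteq> []" using ys(1) by (simp add: iwalk_def)
  show ?case
  proof (cases "y \<in> set ys")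
    case False
    then show ?thesis using ys ne step(1)
      by (intro exI[of _ "y # ys"]) (auto intro: iwalk_Cons)
  next
    case True
    then obtain k where k: "k < length ys" "ys!k = y" by (auto simp: in_set_conv_nth)
    have "iwalk E (drop k ys)" using iwalk_drop ys(1) k(1) by blast
    moreover have "distinct (drop k ys)" using ys(2) by simp
    moreover have "hd (drop k ys) = y" using k by (simp add: hd_drop_conv_nth)
    moreover have "last (drop k ys) = l0" using ys(4) k(1) by simp
    ultimately show ?thesis by blast
  qed
qed

lemma exists_port_path:
  assumes "E\<^sup>*\<^sup>* v l0"
  shows "\<exists>ps xs. port_path E port v ps xs \<and> last xs = l0"
proof -
  obtain xs where xs: "iwalk E xs" "distinct xs" "hd xs = v" "last xs = l0"
    using exists_path[OF assms] by blast
  define ps where "ps = map (\<lambda>i. (port (xs!i) (xs!Suc i), port (xs!Suc i) (xs!i))) [0..<length xs - 1]"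
  have ne: "xs \<noteq> []" using xs(1) by (simp add: iwalk_def)
  have "port_path E port v ps xs"
    unfolding port_path_def ps_def using xs ne by (auto simp: iwalk_def)
  then show ?thesis using xs(4) by blast
qed

theorem proposition1:
  fixes V :: "'v set" and E :: "'v \<Rightarrow> 'v \<Rightarrow> bool" and port :: "'v \<Rightarrow> 'v \<Rightarrow> nat"
  assumes "port_graph V E port"
    and "feasible V E port"
  shows "election_index V E port =
    (LEAST l. \<forall>v\<in>V. \<forall>w\<in>V. v \<noteq> w \<longrightarrow> aview E port l v \<noteq> aview E port l w)"
proof -
  define P where "P l \<longleftrightarrow> (\<forall>v\<in>V. \<forall>w\<in>V. v \<noteq> w \<longrightarrow> aview E port l v \<noteq> aview E port l w)" for l
  have finV: "finite V" and neV: "V \<noteq> {}" and conn: "\<forall>v\<in>V. \<forall>w\<in>V. E\<^sup>*\<^sup>* v w"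
    using assms(1) by (auto simp: port_graph_def)
  have ex: "\<exists>l. P l"
  proof -
    define D where "D = {(v,w). v \<in> V \<and> w \<in> V \<and> v \<noteq> w}"
    define f where "f = (\<lambda>(v,w). SOME l. aview E port l v \<noteq> aview E port l w)"
    have fD: "aview E port (f (v,w)) v \<noteq> aview E port (f (v,w)) w" if "(v,w) \<in> D" for v w
    proof -
      from that have "v \<in> V" "w \<in> V" "v \<noteq> w" by (auto simp: D_def)
      then have "view E port v \<noteq> view E port w" using assms(2) by (auto simp: feasible_def)
      then obtain l where "tview E port l v \<noteq> tview E port l w" by (auto simp: view_def)
      then have "aview E port l v \<noteq> aview E port l w" using aview_tview by metis
      then have "\<exists>l. aview E port l v \<noteq> aview E port l w" by (rule exI)
      then show ?thesis unfolding f_def by (simp, rule someI_ex)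
    qed
    define S where "S = insert 0 (f ` D)"
    have "D \<subseteq> V \<times> V" by (auto simp: D_def)
    moreover have "finite (V \<times> V)" using finV by simp
    ultimately have "finite D" by (rule finite_subset)
    then have finS: "finite S" by (simp add: S_def)
    have "P (Max S)"
      unfolding P_def
    proof (intro ballI impI)
      fix v w assume "v \<in> V" "w \<in> V" "v \<noteq> w"
      then have d: "(v,w) \<in> D" by (simp add: D_def)
      then have "f (v,w) \<in> S" by (simp add: S_def)
      then have le: "f (v,w) \<le> Max S" using finS by (rule Max_ge[rotated])
      show "aview E port (Max S) v \<noteq> aview E port (Max S) w"
      proof
        assume "aview E port (Max S) v = aview E port (Max S) w"
        with le have "aview E port (f (v,w)) v = aview E port (f (v,w)) w" by (rule aview_le_eq)
        with fD[OF d] show False by simp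
      qed
    qed
    then show ?thesis by blast
  qed
  define L where "L = (LEAST l. P l)"
  have PL: "P L" unfolding L_def using ex by (rule LeastI_ex)
  have lower: "P (run_time V E port A)" if el: "elects V E port A" for A
  proof (rule ccontr)
    define r where "r = run_time V E port A"
    assume "\<not> P (run_time V E port A)"
    then obtain v w where vw: "v \<in> V" "w \<in> V" "v \<noteq> w" "aview E port r v = aview E port r w"
      unfolding P_def r_def by blast
    have eqt: "t \<le> r \<Longrightarrow> aview E port t v = aview E port t w" for t
      by (rule aview_le_eq[OF _ vw(4)])
    have le: "out_round E port A u \<le> r" if "u \<in> V" for u
    proof -
      have "out_round E port A u \<in> out_round E port A ` V" using that by simp
      moreover have "finite (out_round E port A ` V)" using finV by simp
      ultimately show ?thesis unfolding r_def run_time_def by (simp add: Max_ge)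
    qed
    have dd: "A (out_round E port A u) (aview E port (out_round E port A u) u) \<noteq> None" if "u \<in> V" for u
    proof -
      have "\<exists>t. A t (aview E port t u) \<noteq> None" using el that unfolding elects_def by blast
      then have "A (LEAST t. A t (aview E port t u) \<noteq> None) (aview E port (LEAST t. A t (aview E port t u) \<noteq> None) u) \<noteq> None"
        by (rule LeastI_ex)
      then show ?thesis unfolding out_round_def .
    qed
    have dv: "A (out_round E port A v) (aview E port (out_round E port A v) v) \<noteq> None"
      using dd vw(1) .
    have dw: "A (out_round E port A w) (aview E port (out_round E port A w) w) \<noteq> None"
      using dd vw(2) .
    have "A (out_round E port A v) (aview E port (out_round E port A v) w) \<noteq> None"
      using dv eqt[OF le[OF vw(1)]] by simp
    then have "(LEAST t. A t (aview E port t w) \<noteq> None) \<le> out_round E port A v"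
      by (rule Least_le)
    then have "out_round E port A w \<le> out_round E port A v" by (simp add: out_round_def)
    moreover
    have "A (out_round E port A w) (aview E port (out_round E port A w) v) \<noteq> None"
      using dw eqt[OF le[OF vw(2)]] by simp
    then have "(LEAST t. A t (aview E port t v) \<noteq> None) \<le> out_round E port A w"
      by (rule Least_le)
    then have "out_round E port A v \<le> out_round E port A w" by (simp add: out_round_def)
    ultimately have oeq: "out_round E port A v = out_round E port A w" by simp
    have neq: "node_output E port A v = node_output E port A w"
      unfolding node_output_def using oeq eqt[OF le[OF vw(1)]] by simp
    obtain leader where ld: "\<forall>u\<in>V. \<exists>xs. port_path E port u (node_output E port A u) xs \<and> last xs = leader"
      using el unfolding elects_def by blast
    obtain xs where xs: "port_path E port v (node_output E port A v) xs" "last xs = leader"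
      using ld vw(1) by blast
    obtain ys where ys: "port_path E port w (node_output E port A w) ys" "last ys = leader"
      using ld vw(2) by blast
    have "xs = ys" using path_unique[OF assms(1) xs(1) ys(1)[folded neq]] xs(2) ys(2) by simp
    moreover have "hd xs = v" "hd ys = w"
      using xs(1) ys(1) by (auto simp: port_path_def)
    ultimately show False using vw(3) by simp
  qed
  obtain l0 where l0: "l0 \<in> V" using neV by blast
  define Q where "Q b ps \<longleftrightarrow> (\<exists>v\<in>V. aview E port L v = b \<and> (\<exists>xs. port_path E port v ps xs \<and> last xs = l0))" for b ps
  define A :: algorithm where "A = (\<lambda>t b. if t = L then Some (SOME ps. Q b ps) else None)"
  have outr: "out_round E port A v = L" for v
    unfolding out_round_def
  proof (rule Least_equality)
    show "A L (aview E port L v) \<noteq> None" by (simp add: A_def)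
  next
    fix y assume "A y (aview E port y v) \<noteq> None"
    then have "y = L" by (simp add: A_def split: if_split_asm)
    then show "L \<le> y" by simp
  qed
  have nout: "Q (aview E port L v) (node_output E port A v)" if "v \<in> V" for v
  proof -
    have "E\<^sup>*\<^sup>* v l0" using conn that l0 by blast
    then have "\<exists>ps xs. port_path E port v ps xs \<and> last xs = l0" by (rule exists_port_path)
    then obtain ps xs where "port_path E port v ps xs" "last xs = l0" by blast
    then have "\<exists>ps. Q (aview E port L v) ps" unfolding Q_def using that by blast
    then have "Q (aview E port L v) (SOME ps. Q (aview E port L v) ps)" by (rule someI_ex)
    moreover have "node_output E port A v = (SOME ps. Q (aview E port L v) ps)"
      unfolding node_output_def outr by (simp add: A_def)
    ultimately show ?thesis by simp
  qed
  have el: "elects V E port A"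
    unfolding elects_def
  proof (intro conjI)
    show "\<forall>v\<in>V. \<exists>t. A t (aview E port t v) \<noteq> None" by (auto simp: A_def)
    show "\<exists>leader\<in>V. \<forall>v\<in>V. \<exists>xs. port_path E port v (node_output E port A v) xs \<and> last xs = leader"
    proof (intro bexI[OF _ l0] ballI)
      fix v assume v: "v \<in> V"
      from nout[OF v] obtain v' where v': "v' \<in> V" "aview E port L v' = aview E port L v"
        "\<exists>xs. port_path E port v' (node_output E port A v) xs \<and> last xs = l0"
        unfolding Q_def by blast
      then have "v' = v" using PL v unfolding P_def by blast
      then show "\<exists>xs. port_path E port v (node_output E port A v) xs \<and> last xs = l0" using v' by simp
    qed
  qed
  have rt: "run_time V E port A = L"
  proof -
    have "(\<lambda>v. L) ` V = {L}" using neV by auto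
    then show ?thesis unfolding run_time_def outr by simp
  qed
  have "election_index V E port \<le> L"
    unfolding election_index_def by (rule Least_le) (use el rt in blast)
  moreover have "L \<le> election_index V E port"
  proof -
    have "\<exists>r A. elects V E port A \<and> run_time V E port A = r" using el by blast
    then have "\<exists>A. elects V E port A \<and> run_time V E port A = election_index V E port"
      unfolding election_index_def by (rule LeastI_ex)
    then obtain B where "elects V E port B" "run_time V E port B = election_index V E port" by blast
    then have "P (election_index V E port)" using lower[of B] by simp
    then show ?thesis unfolding L_def by (rule Least_le)
  qed
  ultimately show ?thesis unfolding L_def P_def by simp
qed

end
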